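(* Consider $K$ arms, each a two-state irreducible Markov chain on $\{0,1\}$ with transition probabilities $p_{01}^i,p_{10}^i$, let $\sigma_i=p_{01}^i+p_{10}^i$, $\mu_i=p_{01}^i/\sigma_i$, arm 1 optimal ($\mu_1=\max_j\mu_j$), $\Delta_i=\mu_1-\mu_i$, and let $U=\sum_{i\neq1}\frac{4L}{\mu_1-\mu_i}$ with $L=\frac{360}{\min_j\sigma_j}$. Define $B_a=\sum_{i\neq1}\Delta_i\Big[\frac{2\,\mathbb 1\{p_{01}^1p_{10}^i<p_{10}^1\}}{D(p_{01}^i\|\frac{p_{01}^1p_{10}^i}{p_{10}^1})}+\frac{2}{D(p_{10}^i\|\frac{p_{10}^1p_{01}^i}{p_{01}^1})}\Big]$, $B_b=\sum_{i\neq1}\Delta_i\Big[\frac{\mathbb 1\{\mu_1p_{10}^i<1-\mu_1\}}{D(p_{01}^i\|\frac{\mu_1p_{10}^i}{1-\mu_1})}+\frac{1}{D(p_{10}^i\|\frac{p_{01}^i(1-\mu_1)}{\mu_1})}\Big]$, $B_c=\sum_{i\neq1}\frac{2\Delta_i}{D(\mu_i\|\frac{p_{01}^1}{p_{01}^1+p_{10}^1})}$, $B_d=\sum_{i\neq1}\frac{\Delta_i}{D(\mu_i\|\mu_1)}$. Then: (i) if every suboptimal arm is i.i.d. ($\sigma_i=1$ for $i\neq1$), the asymptotic regret bound of TV-KL-UCB ($B_c$ if arm 1 is truly Markovian, $B_d$ if arm 1 is i.i.d.) is smaller than $U$; (ii) if every suboptimal arm is truly Markovian ($\sigma_i\ne1$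 for $i\neq1$) and $\min_j\sigma_j\ge\frac1{1440}$, the asymptotic regret bound of TV-KL-UCB ($B_a$ if arm 1 is truly Markovian, $B_b$ if arm 1 is i.i.d.) is smaller than $U$.
   Context: $D(a\|b)=a\log\frac ab+(1-a)\log\frac{1-a}{1-b}$ is the Bernoulli KL divergence. An arm is i.i.d. if $p_{01}^i+p_{10}^i=1$ and truly Markovian otherwise. The quantities $B_a,\dots,B_d$ are the upper bounds on $\limsup_n R_n/\log n$ for the TV-KL-UCB algorithm in the respective cases, and $U$ is the asymptotic regret upper bound (on $\limsup_n R_n/\log n$) of the sample-mean UCB algorithm UCB-SM of Tekin and Liu for two-state arms with reward $r(s)=s$. *)

theory Defs
  imports Complex_Main
begin

text \<open>Bernoulli KL divergence, natural logarithm (convention 0 log 0 = 0 is automatic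
since 0 * x = 0).\<close>
definition klB :: "real \<Rightarrow> real \<Rightarrow> real" where
  "klB a b = a * ln (a / b) + (1 - a) * ln ((1 - a) / (1 - b))"

text \<open>Arms are indexed 1..K; arm i has transition probabilities p01 i, p10 i.\<close>
definition sig :: "(nat \<Rightarrow> real) \<Rightarrow> (nat \<Rightarrow> real) \<Rightarrow> nat \<Rightarrow> real" where
  "sig p01 p10 i = p01 i + p10 i"

definition mu :: "(nat \<Rightarrow> real) \<Rightarrow> (nat \<Rightarrow> real) \<Rightarrow> nat \<Rightarrow> real" where
  "mu p01 p10 i = p01 i / sig p01 p10 i"

definition gap :: "(nat \<Rightarrow> real) \<Rightarrow> (nat \<Rightarrow> real) \<Rightarrow> nat \<Rightarrow> real" where
  "gap p01 p10 i = mu p01 p10 1 - mu p01 p10 i"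

definition Lconst :: "nat \<Rightarrow> (nat \<Rightarrow> real) \<Rightarrow> (nat \<Rightarrow> real) \<Rightarrow> real" where
  "Lconst K p01 p10 = 360 / Min (sig p01 p10 ` {1..K})"

definition U_SM :: "nat \<Rightarrow> (nat \<Rightarrow> real) \<Rightarrow> (nat \<Rightarrow> real) \<Rightarrow> real" where
  "U_SM K p01 p10 = (\<Sum>i\<in>{2..K}. 4 * Lconst K p01 p10 / (mu p01 p10 1 - mu p01 p10 i))"

definition B_a :: "nat \<Rightarrow> (nat \<Rightarrow> real) \<Rightarrow> (nat \<Rightarrow> real) \<Rightarrow> real" where
  "B_a K p01 p10 = (\<Sum>i\<in>{2..K}. gap p01 p10 i *
     ((if p01 1 * p10 i < p10 1
       then 2 / klB (p01 i) (p01 1 * p10 i / p10 1) else 0)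
      + 2 / klB (p10 i) (p10 1 * p01 i / p01 1)))"

definition B_b :: "nat \<Rightarrow> (nat \<Rightarrow> real) \<Rightarrow> (nat \<Rightarrow> real) \<Rightarrow> real" where
  "B_b K p01 p10 = (\<Sum>i\<in>{2..K}. gap p01 p10 i *
     ((if mu p01 p10 1 * p10 i < 1 - mu p01 p10 1
       then 1 / klB (p01 i) (mu p01 p10 1 * p10 i / (1 - mu p01 p10 1)) else 0)
      + 1 / klB (p10 i) (p01 i * (1 - mu p01 p10 1) / mu p01 p10 1)))"

definition B_c :: "nat \<Rightarrow> (nat \<Rightarrow> real) \<Rightarrow> (nat \<Rightarrow> real) \<Rightarrow> real" where
  "B_c K p01 p10 = (\<Sum>i\<in>{2..K}. 2 * gap p01 p10 i /
     klB (mu p01 p10 i) (p01 1 / (p01 1 + p10 1)))"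

definition B_d :: "nat \<Rightarrow> (nat \<Rightarrow> real) \<Rightarrow> (nat \<Rightarrow> real) \<Rightarrow> real" where
  "B_d K p01 p10 = (\<Sum>i\<in>{2..K}. gap p01 p10 i / klB (mu p01 p10 i) (mu p01 p10 1))"

end

theory Submission
  imports Defs
begin

lemma xlogx:
  fixes a b :: real assumes "0 \<le> a" "0 < b"
  shows "2*a - 2*sqrt(a*b) \<le> a*ln(a/b)"
proof (cases "a = 0")
  case True then show ?thesis by simp
next
  case False
  hence a: "a > 0" using assms by simp
  have q: "b/a > 0" using a assms by simp
  have "ln (sqrt (b/a)) \<le> sqrt (b/a) - 1" using q by (intro ln_le_minus_one) simp
  moreover have "ln (sqrt (b/a)) = ln (b/a) / 2" using q by (simp add: ln_sqrt)
  ultimately have l: "ln (b/a) \<le> 2*(sqrt (b/a) - 1)" by simp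
  have "ln (a/b) = - ln (b/a)" using a assms by (simp add: ln_div)
  moreover have "a * sqrt (b/a) = sqrt (a*b)"
  proof -
    have "a*b = a^2 * (b/a)" using a by (simp add: power2_eq_square)
    hence "sqrt (a*b) = sqrt (a^2) * sqrt (b/a)" by (metis real_sqrt_mult)
    thus ?thesis using a by simp
  qed
  moreover have "a * ln (b/a) \<le> a * (2*(sqrt (b/a) - 1))" using l a by (intro mult_left_mono) auto
  ultimately show ?thesis by (simp add: algebra_simps)
qed

lemma sqrt_amgm:
  fixes x y :: real assumes "0 \<le> x" "0 \<le> y"
  shows "2 * sqrt (x*y) \<le> x + y"
proof -
  have "0 \<le> (sqrt x - sqrt y)^2" by simp
  also have "\<dots> = x + y - 2 * sqrt (x*y)" using assms
    by (simp add: power2_eq_square algebra_simps real_sqrt_mult)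
  finally show ?thesis by simp
qed

lemma kl_lb:
  fixes a b c :: real
  assumes "0 \<le> a" "a \<le> 1" "0 < b" "b < 1" "a \<le> c" "b \<le> c"
  shows "(a-b)^2 \<le> 4*c*klB a b"
proof -
  have 1: "2*a - 2*sqrt(a*b) \<le> a*ln(a/b)" using assms by (intro xlogx) auto
  have 2: "2*(1-a) - 2*sqrt((1-a)*(1-b)) \<le> (1-a)*ln((1-a)/(1-b))" using assms by (intro xlogx) auto
  have 3: "2 * sqrt ((1-a)*(1-b)) \<le> (1-a) + (1-b)" using assms by (intro sqrt_amgm) auto
  have H: "(sqrt a - sqrt b)^2 \<le> klB a b"
  proof -
    have "(sqrt a - sqrt b)^2 = a + b - 2*sqrt(a*b)" using assms
      by (simp add: power2_eq_square algebra_simps real_sqrt_mult)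
    thus ?thesis using 1 2 3 unfolding klB_def by (smt (verit))
  qed
  have S: "(sqrt a + sqrt b)^2 \<le> 4*c"
  proof -
    have "(sqrt a + sqrt b)^2 \<le> 2*a+2*b" using sqrt_amgm[of a b] assms
      by (simp add: power2_eq_square algebra_simps real_sqrt_mult)
    thus ?thesis using assms by linarith
  qed
  have "(a-b)^2 = (sqrt a - sqrt b)^2 * (sqrt a + sqrt b)^2" using assms
    by (simp add: power2_eq_square algebra_simps)
  also have "\<dots> \<le> klB a b * (4*c)"
  proof -
    have "0 \<le> klB a b" using H zero_le_power2[of "sqrt a - sqrt b"] by linarith
    thus ?thesis using H S by (intro mult_mono) auto
  qed
  finally show ?thesis by (simp add: algebra_simps)
qed

lemma G:
  fixes \<Delta> d k s c D :: real
  assumes "\<Delta> = d * k" "0 < c" "k^2 * s * c \<le> 1" "d^2 \<le> 4*c*D" "0 \<le> s"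
  shows "\<Delta>^2 * s \<le> 4*D"
proof -
  have "\<Delta>^2 * s = d^2 * (k^2 * s)" using assms(1) by (simp add: power_mult_distrib)
  also have "\<dots> \<le> d^2 * (1/c)" using assms by (intro mult_left_mono) (auto simp: field_simps)
  also have "\<dots> \<le> 4*D" using assms by (simp add: field_simps)
  finally show ?thesis .
qed

lemma fin:
  fixes \<Delta> s D :: real
  assumes "0 < \<Delta>" "0 < s" "\<Delta>^2 * s \<le> 4*D"
  shows "0 < D" "\<Delta> * (2/D) \<le> 8/(s*\<Delta>)"
proof -
  have p: "0 < \<Delta>^2 * s" using assms by simp
  thus "0 < D" using assms by linarith
  thus "\<Delta> * (2/D) \<le> 8/(s*\<Delta>)" using assms p \<open>0 < D\<close>
    by (simp add: field_simps power2_eq_square)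
qed

lemma core1:
  fixes x y u v :: real
  assumes "0<x" "x\<le>1" "0<y" "y\<le>1" "0<u" "u\<le>1" "0<v" "v\<le>1" "u*y < x*v"
  defines "\<Delta> \<equiv> x/(x+y) - u/(u+v)"
  shows "0 < klB v (y*u/x)" "\<Delta> * (2/klB v (y*u/x)) \<le> 8/((u+v)*\<Delta>)"
proof -
  define b where "b = y*u/x"
  have b0: "0 < b" using assms by (simp add: b_def)
  have bv: "b < v" using assms by (simp add: b_def field_simps)
  have kl: "(v-b)^2 \<le> 4*v*klB v b" using b0 bv assms by (intro kl_lb) auto
  have D: "\<Delta> = (v-b) * (x/((x+y)*(u+v)))" using assms unfolding \<Delta>_def b_def
    by (simp add: divide_simps) (simp add: algebra_simps)
  have k: "(x/((x+y)*(u+v)))^2 * (u+v) * v \<le> 1"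
  proof -
    have "x^2 * v \<le> (x+y)^2 * (u+v)"
    proof -
      have "x^2 \<le> (x+y)^2" using assms by (intro power_mono) auto
      moreover have "v \<le> u+v" using assms by simp
      ultimately show ?thesis using assms by (intro mult_mono) auto
    qed
    moreover have "(x/((x+y)*(u+v)))^2 * (u+v) * v = (x^2 * v) / ((x+y)^2 * (u+v))"
      using assms by (simp add: power2_eq_square)
    moreover have "0 < (x+y)^2 * (u+v)" using assms by simp
    ultimately show ?thesis by simp
  qed
  have "\<Delta>^2 * (u+v) \<le> 4 * klB v b" using G[OF D _ k kl] assms by simp
  moreover have "0 < \<Delta>" using bv D assms by simp
  ultimately show "0 < klB v (y*u/x)" "\<Delta> * (2/klB v (y*u/x)) \<le> 8/((u+v)*\<Delta>)"
    using fin[of \<Delta> "u+v" "klB v b"] assms b_def by auto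
qed

lemma core2:
  fixes x y u v :: real
  assumes "0<x" "x\<le>1" "0<y" "y\<le>1" "0<u" "u\<le>1" "0<v" "v\<le>1" "u*y < x*v" "x*v < y"
  defines "\<Delta> \<equiv> x/(x+y) - u/(u+v)"
  shows "0 < klB u (x*v/y)" "\<Delta> * (2/klB u (x*v/y)) \<le> 8/((u+v)*\<Delta>)"
proof -
  define b where "b = x*v/y"
  have b1: "b < 1" using assms by (simp add: b_def field_simps)
  have ub: "u < b" using assms by (simp add: b_def field_simps)
  have kl: "(b-u)^2 \<le> 4*b*klB u b"
    using b1 ub assms kl_lb[of u b b] by (simp add: power2_commute)
  have D: "\<Delta> = (b-u) * (y/((x+y)*(u+v)))" using assms unfolding \<Delta>_def b_def
    by (simp add: divide_simps) (simp add: algebra_simps)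
  have k: "(y/((x+y)*(u+v)))^2 * (u+v) * b \<le> 1"
  proof -
    have "y^2 * b \<le> (x+y)^2 * (u+v)"
    proof -
      have "y^2 * b = y * (x * v)" using assms by (simp add: b_def power2_eq_square)
      also have "\<dots> \<le> (x+y)^2 * (u+v)"
      proof -
        have "y * x \<le> (x+y)^2" using assms by (simp add: power2_eq_square algebra_simps)
        moreover have "v \<le> u+v" using assms by simp
        ultimately show ?thesis using assms
          by (metis mult.assoc mult.commute mult_mono' less_imp_le mult_nonneg_nonneg)
      qed
      finally show ?thesis .
    qed
    moreover have "(y/((x+y)*(u+v)))^2 * (u+v) * b = (y^2 * b) / ((x+y)^2 * (u+v))"
      using assms by (simp add: power2_eq_square)
    moreover have "0 < (x+y)^2 * (u+v)" using assms by simp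
    ultimately show ?thesis by simp
  qed
  have "\<Delta>^2 * (u+v) \<le> 4 * klB u b" using G[OF D _ k kl] assms ub by simp
  moreover have "0 < \<Delta>" using ub D assms by simp
  ultimately show "0 < klB u (x*v/y)" "\<Delta> * (2/klB u (x*v/y)) \<le> 8/((u+v)*\<Delta>)"
    using fin[of \<Delta> "u+v" "klB u b"] assms b_def by auto
qed

lemma final_cmp:
  fixes \<Delta> m s t :: real
  assumes "0 < \<Delta>" "0 < m" "m \<le> s" "t \<le> 16/(s*\<Delta>)"
  shows "t < 4*(360/m)/\<Delta>"
proof -
  have "16/(s*\<Delta>) \<le> 16/(m*\<Delta>)" using assms by (intro divide_left_mono mult_pos_pos mult_right_mono) auto
  also have "\<dots> < 4*(360/m)/\<Delta>" using assms by (simp add: field_simps)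
  finally show ?thesis using assms by linarith
qed

lemma delta_pos:
  fixes x y u v :: real
  assumes "0<x" "0<y" "0<u" "0<v" "u/(u+v) < x/(x+y)"
  shows "u*y < x*v"
  using assms by (simp add: field_simps)

lemma term_a:
  fixes x y u v m :: real
  assumes "0<x" "x\<le>1" "0<y" "y\<le>1" "0<u" "u\<le>1" "0<v" "v\<le>1" "u/(u+v) < x/(x+y)"
    "0 < m" "m \<le> u+v"
  shows "(x/(x+y) - u/(u+v)) * ((if x*v < y then 2/klB u (x*v/y) else 0) + 2/klB v (y*u/x))
     < 4*(360/m)/(x/(x+y) - u/(u+v))"
proof -
  define \<Delta> where "\<Delta> = x/(x+y) - u/(u+v)"
  have uy: "u*y < x*v" using delta_pos assms by blast
  have dp: "0 < \<Delta>" using assms \<Delta>_def by simp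
  have c1: "\<Delta> * (2/klB v (y*u/x)) \<le> 8/((u+v)*\<Delta>)" using core1[OF assms(1-8) uy] \<Delta>_def by simp
  have c2: "\<Delta> * (if x*v < y then 2/klB u (x*v/y) else 0) \<le> 8/((u+v)*\<Delta>)"
  proof (cases "x*v < y")
    case True thus ?thesis using core2[OF assms(1-8) uy True] \<Delta>_def by simp
  next
    case False thus ?thesis using dp assms by simp
  qed
  have "\<Delta> * ((if x*v < y then 2/klB u (x*v/y) else 0) + 2/klB v (y*u/x)) \<le> 16/((u+v)*\<Delta>)"
    using c1 c2 by (simp add: distrib_left)
  from final_cmp[OF dp assms(10,11) this] show ?thesis unfolding \<Delta>_def .
qed

lemma term_b:
  fixes x y u v m :: real
  assumes "0<x" "x\<le>1" "0<y" "y\<le>1" "0<u" "u\<le>1" "0<v" "v\<le>1" "u/(u+v) < x/(x+y)"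
    "0 < m" "m \<le> u+v" "x + y = 1"
  shows "(x/(x+y) - u/(u+v)) * ((if x/(x+y)*v < 1 - x/(x+y) then 1/klB u (x/(x+y)*v/(1 - x/(x+y))) else 0)
        + 1/klB v (u*(1 - x/(x+y))/(x/(x+y))))
     < 4*(360/m)/(x/(x+y) - u/(u+v))"
proof -
  define \<Delta> where "\<Delta> = x/(x+y) - u/(u+v)"
  have uy: "u*y < x*v" using delta_pos assms by blast
  have dp: "0 < \<Delta>" using assms \<Delta>_def by simp
  have e1: "x/(x+y) = x" "1 - x = y" "u*y = y*u" using assms by auto
  have k1: "0 < klB v (y*u/x)" using core1[OF assms(1-8) uy] by simp
  have "\<Delta> * (1/klB v (y*u/x)) \<le> \<Delta> * (2/klB v (y*u/x))"
    using k1 dp by (intro mult_left_mono divide_right_mono) auto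
  moreover have "\<Delta> * (if x*v < y then 1/klB u (x*v/y) else 0) \<le> \<Delta> * (if x*v < y then 2/klB u (x*v/y) else 0)"
  proof (cases "x*v < y")
    case True
    have "0 < klB u (x*v/y)" using core2[OF assms(1-8) uy True] by simp
    thus ?thesis using True dp by (simp add: divide_right_mono)
  qed simp
  ultimately have "\<Delta> * ((if x*v < y then 1/klB u (x*v/y) else 0) + 1/klB v (y*u/x))
     \<le> \<Delta> * ((if x*v < y then 2/klB u (x*v/y) else 0) + 2/klB v (y*u/x))"
    by (simp add: distrib_left)
  also have "\<dots> < 4*(360/m)/\<Delta>" using term_a[OF assms(1-11)] \<Delta>_def by simp
  finally have "\<Delta> * ((if x*v < y then 1/klB u (x*v/y) else 0) + 1/klB v (y*u/x)) < 4*(360/m)/\<Delta>" .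
  thus ?thesis unfolding e1 using \<Delta>_def e1 by simp
qed

lemma term_c:
  fixes x y u v m :: real
  assumes "0<x" "x\<le>1" "0<y" "y\<le>1" "0<u" "u\<le>1" "0<v" "v\<le>1" "u/(u+v) < x/(x+y)"
    "0 < m" "m \<le> u+v" "u + v = 1"
  shows "2 * (x/(x+y) - u/(u+v)) / klB (u/(u+v)) (x/(x+y)) < 4*(360/m)/(x/(x+y) - u/(u+v))"
    and "(x/(x+y) - u/(u+v)) / klB (u/(u+v)) (x/(x+y)) < 4*(360/m)/(x/(x+y) - u/(u+v))"
proof -
  define \<Delta> where "\<Delta> = x/(x+y) - u/(u+v)"
  define b where "b = x/(x+y)"
  have dp: "0 < \<Delta>" using assms \<Delta>_def by simp
  have eu: "u/(u+v) = u" using assms by simp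
  have b0: "0 < b" "b < 1" using assms by (auto simp: b_def field_simps)
  have "(u - b)^2 \<le> 4*1*klB u b" using b0 assms eu by (intro kl_lb) auto
  moreover have "(u-b)^2 = \<Delta>^2" using \<Delta>_def b_def eu by (simp add: power2_commute)
  ultimately have "\<Delta>^2 * 1 \<le> 4 * klB u b" by simp
  from fin[OF dp _ this] have f: "0 < klB u b" "\<Delta> * (2 / klB u b) \<le> 8 / (1 * \<Delta>)" by auto
  have "2 * \<Delta> / klB u b \<le> 16 / ((u+v) * \<Delta>)" using f dp assms
    by (simp add: field_simps)
  from final_cmp[OF dp assms(10,11) this]
  show "2 * (x/(x+y) - u/(u+v)) / klB (u/(u+v)) (x/(x+y)) < 4*(360/m)/(x/(x+y) - u/(u+v))"
    using \<Delta>_def b_def eu by simp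
  have "\<Delta> / klB u b \<le> 16 / ((u+v) * \<Delta>)" using f dp assms
    by (simp add: field_simps)
  from final_cmp[OF dp assms(10,11) this]
  show "(x/(x+y) - u/(u+v)) / klB (u/(u+v)) (x/(x+y)) < 4*(360/m)/(x/(x+y) - u/(u+v))"
    using \<Delta>_def b_def eu by simp
qed

theorem theorem2:
  fixes K :: nat and p01 p10 :: "nat \<Rightarrow> real"
  assumes K2: "K \<ge> 2"
    and p01_range: "\<And>i. i \<in> {1..K} \<Longrightarrow> 0 < p01 i \<and> p01 i \<le> 1"
    and p10_range: "\<And>i. i \<in> {1..K} \<Longrightarrow> 0 < p10 i \<and> p10 i \<le> 1"
    and opt: "\<And>i. i \<in> {2..K} \<Longrightarrow> mu p01 p10 i < mu p01 p10 1"
  shows "((\<forall>i\<in>{2..K}. sig p01 p10 i = 1) \<longrightarrow>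
            (if sig p01 p10 1 \<noteq> 1 then B_c K p01 p10 else B_d K p01 p10) < U_SM K p01 p10)
       \<and> ((\<forall>i\<in>{2..K}. sig p01 p10 i \<noteq> 1) \<and> Min (sig p01 p10 ` {1..K}) \<ge> 1/1440 \<longrightarrow>
            (if sig p01 p10 1 \<noteq> 1 then B_a K p01 p10 else B_b K p01 p10) < U_SM K p01 p10)"
proof -
  define m where "m = Min (sig p01 p10 ` {1..K})"
  have fs: "finite (sig p01 p10 ` {1..K})" "sig p01 p10 ` {1..K} \<noteq> {}" using K2 by auto
  have mpos: "0 < m" unfolding m_def using fs p01_range p10_range
    by (subst Min_gr_iff) (auto simp: sig_def intro: add_pos_pos)
  have mle: "m \<le> p01 i + p10 i" if "i \<in> {1..K}" for i
    unfolding m_def using fs that by (metis Min_le image_eqI sig_def)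
  have one: "1 \<in> {1..K}" using K2 by simp
  have sub: "i \<in> {1..K}" if "i \<in> {2..K}" for i using that by simp
  have ne: "{2..K} \<noteq> {}" using K2 by simp
  note r1 = p01_range[OF one] p10_range[OF one]
  have U: "U_SM K p01 p10 = (\<Sum>i\<in>{2..K}. 4*(360/m)/(p01 1/(p01 1+p10 1) - p01 i/(p01 i+p10 i)))"
    unfolding U_SM_def Lconst_def mu_def sig_def m_def by simp
  have opt': "p01 i/(p01 i+p10 i) < p01 1/(p01 1+p10 1)" if "i \<in> {2..K}" for i
    using opt[OF that] unfolding mu_def sig_def .
  have P1: "(if sig p01 p10 1 \<noteq> 1 then B_c K p01 p10 else B_d K p01 p10) < U_SM K p01 p10"
    if iid: "\<forall>i\<in>{2..K}. sig p01 p10 i = 1"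
  proof -
    have h: "p01 i + p10 i = 1" if "i \<in> {2..K}" for i using iid that by (simp add: sig_def)
    have "B_c K p01 p10 < U_SM K p01 p10" unfolding B_c_def U gap_def mu_def sig_def
      apply (rule sum_strict_mono[OF _ ne], simp)
      subgoal premises pi for i
      proof -
        have i: "i \<in> {1..K}" using pi by simp
        note a = p01_range[OF i] p10_range[OF i]
        show ?thesis using term_c(1)[OF conjunct1[OF r1(1)] conjunct2[OF r1(1)] conjunct1[OF r1(2)] conjunct2[OF r1(2)]
          conjunct1[OF a(1)] conjunct2[OF a(1)] conjunct1[OF a(2)] conjunct2[OF a(2)] opt'[OF pi] mpos mle[OF i] h[OF pi]] by simp
      qed
      done
    moreover have "B_d K p01 p10 < U_SM K p01 p10" unfolding B_d_def U gap_def mu_def sig_def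
      apply (rule sum_strict_mono[OF _ ne], simp)
      subgoal premises pi for i
      proof -
        have i: "i \<in> {1..K}" using pi by simp
        note a = p01_range[OF i] p10_range[OF i]
        show ?thesis using term_c(2)[OF conjunct1[OF r1(1)] conjunct2[OF r1(1)] conjunct1[OF r1(2)] conjunct2[OF r1(2)]
          conjunct1[OF a(1)] conjunct2[OF a(1)] conjunct1[OF a(2)] conjunct2[OF a(2)] opt'[OF pi] mpos mle[OF i] h[OF pi]] by simp
      qed
      done
    ultimately show ?thesis by simp
  qed
  have P2: "(if sig p01 p10 1 \<noteq> 1 then B_a K p01 p10 else B_b K p01 p10) < U_SM K p01 p10"
  proof (cases "sig p01 p10 1 \<noteq> 1")
    case True
    have "B_a K p01 p10 < U_SM K p01 p10" unfolding B_a_def U gap_def mu_def sig_def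
      apply (rule sum_strict_mono[OF _ ne], simp)
      subgoal premises pi for i
      proof -
        have i: "i \<in> {1..K}" using pi by simp
        note a = p01_range[OF i] p10_range[OF i]
        show ?thesis using term_a[OF conjunct1[OF r1(1)] conjunct2[OF r1(1)] conjunct1[OF r1(2)] conjunct2[OF r1(2)]
          conjunct1[OF a(1)] conjunct2[OF a(1)] conjunct1[OF a(2)] conjunct2[OF a(2)] opt'[OF pi] mpos mle[OF i]] by simp
      qed
      done
    thus ?thesis using True by simp
  next
    case False
    hence h: "p01 1 + p10 1 = 1" by (simp add: sig_def)
    have "B_b K p01 p10 < U_SM K p01 p10" unfolding B_b_def U gap_def mu_def sig_def
      apply (rule sum_strict_mono[OF _ ne], simp)
      subgoal premises pi for i
      proof -
        have i: "i \<in> {1..K}" using pi by simp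
        note a = p01_range[OF i] p10_range[OF i]
        show ?thesis using term_b[OF conjunct1[OF r1(1)] conjunct2[OF r1(1)] conjunct1[OF r1(2)] conjunct2[OF r1(2)]
          conjunct1[OF a(1)] conjunct2[OF a(1)] conjunct1[OF a(2)] conjunct2[OF a(2)] opt'[OF pi] mpos mle[OF i] h] by simp
      qed
      done
    thus ?thesis using False by simp
  qed
  show ?thesis using P1 P2 by blast
qed

end
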